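(* Consider algorithm naive-fvs with step 4 replaced by the modified step 4'. For every graph $G$ and integer $k$, every execution path of this algorithm started on $(G,k,\emptyset)$ that leads to a solution satisfies $|F'|\le 2|V_-|$.
   Context: All graphs are finite, simple and undirected; $d_G(v)$ denotes the degree of $v$ in $G$, $G-S$ denotes deletion of a vertex set $S$, and $G[S]$ the induced subgraph. A feedback vertex set of $G$ is a set $V_-\subseteq V(G)$ such that $G-V_-$ is a forest. Algorithm naive-fvs$(G,k,F)$ (with $k$ an integer and $F\subseteq V(G)$ inducing a forest) returns a set of vertices or ``NO'' as follows (all choices among several candidates are arbitrary; degrees are in the current graph $G$): (0) If $k<0$ return NO; if $V(G)=\emptyset$ return $\emptyset$. (1) If some vertex $v$ has degree less than $2$, return naive-fvs$(G-\{v\},k,F\setminus\{v\})$. (2) If some $v\in V(G)\setminus F$ has two neighbors in the same connected component of $G[F]$, let $X=$ naive-fvs$(G-\{v\},k-1,F)$ and return $X\cup\{v\}$ (NO if $X$ is NO). (3) Pick $v\in V(G)\setminus F$ of maximum degree. (4) If $d(v)=2$: set $X=\emptyset$; while $G$ contains a cycle $C$, take any vertex $x$ of $C$ not in $F$, add $x$ to $X$ and delete $x$ from $G$; then return $X$ if $|X|\le k$, else NO. (5) Let $X=$ naive-fvs$(G-\{v\},k-1,F)$; if $X$ is not NO, return $X\cup\{v\}$. (6) Return naive-fvs$(G,k,F\cup\{v\})$. The modified step 4 is: (4') If $d(v)\le 3$, compute a minimum-size set $X\subseteq V(G)\setminus F$ such that $G-X$ is a forest, and return $X$ if $|X|\le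 k$, else NO. An execution path is a sequence of calls $c_0,c_1,\dots,c_t$ where $c_0$ is the call on $(G,k,\emptyset)$; for each $j<t$, $c_{j+1}$ is the recursive call made by $c_j$ in step 1 or step 2, or, if $c_j$ reaches step 5, either the call of step 5 or the call of step 6 (the latter considered even if the algorithm would not actually make it); and $c_t$ terminates in step 0 or step 4' without recursion. It leads to a solution if $c_t$ returns a set (not NO). $V_-$ denotes the set of vertices deleted along the path in step 2, in step 5 (when the path follows the step-5 call), together with the set $X$ returned in step 4' of $c_t$ (if $c_t$ ends there); $F'$ denotes the set of vertices added to $F$ by step 6 (when the path follows the step-6 call). *)

theory Defs
  imports Main
begin

definition simple_graph :: "'a set \<Rightarrow> 'a set set \<Rightarrow> bool" where
  "simple_graph V E \<longleftrightarrow> finite V \<and> (\<forall>e\<in>E. \<exists>u v. e = {u, v} \<and> u \<in> V \<and> v \<in> V \<and> u \<noteq> v)"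

definition deg :: "'a set set \<Rightarrow> 'a \<Rightarrow> nat" where
  "deg E v = card {u. {u, v} \<in> E}"

definition del_edges :: "'a set set \<Rightarrow> 'a set \<Rightarrow> 'a set set" where
  "del_edges E S = {e \<in> E. e \<inter> S = {}}"

definition is_cycle :: "'a set set \<Rightarrow> 'a list \<Rightarrow> bool" where
  "is_cycle E cs \<longleftrightarrow> length cs \<ge> 3 \<and> distinct cs \<and>
     (\<forall>i < length cs. {cs ! i, cs ! ((i + 1) mod length cs)} \<in> E)"

definition forest :: "'a set \<Rightarrow> 'a set set \<Rightarrow> bool" where
  "forest V E \<longleftrightarrow> \<not> (\<exists>cs. set cs \<subseteq> V \<and> is_cycle E cs)"

definition same_comp :: "'a set set \<Rightarrow> 'a set \<Rightarrow> 'a \<Rightarrow> 'a \<Rightarrow> bool" where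
  "same_comp E F u w \<longleftrightarrow> u \<in> F \<and> w \<in> F \<and>
     (\<lambda>a b. a \<in> F \<and> b \<in> F \<and> {a, b} \<in> E)\<^sup>*\<^sup>* u w"

definition step2_vertex :: "'a set \<Rightarrow> 'a set set \<Rightarrow> 'a set \<Rightarrow> 'a \<Rightarrow> bool" where
  "step2_vertex V E F v \<longleftrightarrow> v \<in> V - F \<and>
     (\<exists>u w. u \<noteq> w \<and> {u, v} \<in> E \<and> {w, v} \<in> E \<and> same_comp E F u w)"

text \<open>Preconditions under which a call reaches step 3 (steps 0, 1, 2 do not apply).\<close>
definition reaches_step3 :: "'a set \<Rightarrow> 'a set set \<Rightarrow> int \<Rightarrow> 'a set \<Rightarrow> bool" where
  "reaches_step3 V E k F \<longleftrightarrow> k \<ge> 0 \<and> V \<noteq> {} \<and> (\<forall>u\<in>V. deg E u \<ge> 2) \<and>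
     (\<forall>u. \<not> step2_vertex V E F u)"

definition max_deg_choice :: "'a set \<Rightarrow> 'a set set \<Rightarrow> 'a set \<Rightarrow> 'a \<Rightarrow> bool" where
  "max_deg_choice V E F v \<longleftrightarrow> v \<in> V - F \<and> (\<forall>u\<in>V - F. deg E u \<le> deg E v)"

definition min_fvs_avoiding :: "'a set \<Rightarrow> 'a set set \<Rightarrow> 'a set \<Rightarrow> 'a set \<Rightarrow> bool" where
  "min_fvs_avoiding V E F X \<longleftrightarrow> X \<subseteq> V - F \<and> forest (V - X) (del_edges E X) \<and>
     (\<forall>Y. Y \<subseteq> V - F \<and> forest (V - Y) (del_edges E Y) \<longrightarrow> card X \<le> card Y)"

text \<open>fvs_path V E k F Vm F': there is an execution path of the modified algorithm
  (step 4 replaced by step 4') starting at the call on (G,k,F), G = (V,E),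
  which leads to a solution, where Vm is the set V_- of vertices deleted along the
  path in steps 2 and 5 together with the set X returned in step 4', and F' is the
  set of vertices added to F in step 6 along the path.\<close>
inductive fvs_path :: "'a set \<Rightarrow> 'a set set \<Rightarrow> int \<Rightarrow> 'a set \<Rightarrow> 'a set \<Rightarrow> 'a set \<Rightarrow> bool" where
  step0: "k \<ge> 0 \<Longrightarrow> V = {} \<Longrightarrow> fvs_path V E k F {} {}"
| step1: "k \<ge> 0 \<Longrightarrow> V \<noteq> {} \<Longrightarrow> v \<in> V \<Longrightarrow> deg E v < 2 \<Longrightarrow>
     fvs_path (V - {v}) (del_edges E {v}) k (F - {v}) Vm F' \<Longrightarrow> fvs_path V E k F Vm F'"
| step2: "k \<ge> 0 \<Longrightarrow> V \<noteq> {} \<Longrightarrow> (\<forall>u\<in>V. deg E u \<ge> 2) \<Longrightarrow> step2_vertex V E F v \<Longrightarrow>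
     fvs_path (V - {v}) (del_edges E {v}) (k - 1) F Vm F' \<Longrightarrow> fvs_path V E k F (insert v Vm) F'"
| step4': "reaches_step3 V E k F \<Longrightarrow> max_deg_choice V E F v \<Longrightarrow> deg E v \<le> 3 \<Longrightarrow>
     min_fvs_avoiding V E F X \<Longrightarrow> int (card X) \<le> k \<Longrightarrow> fvs_path V E k F X {}"
| step5: "reaches_step3 V E k F \<Longrightarrow> max_deg_choice V E F v \<Longrightarrow> \<not> deg E v \<le> 3 \<Longrightarrow>
     fvs_path (V - {v}) (del_edges E {v}) (k - 1) F Vm F' \<Longrightarrow> fvs_path V E k F (insert v Vm) F'"
| step6: "reaches_step3 V E k F \<Longrightarrow> max_deg_choice V E F v \<Longrightarrow> \<not> deg E v \<le> 3 \<Longrightarrow>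
     fvs_path V E k (insert v F) Vm F' \<Longrightarrow> fvs_path V E k F Vm (insert v F')"

end

theory Submission
  imports Defs Complex_Main
begin


lemma nbr_sub: "simple_graph V E \<Longrightarrow> {u. {u, v} \<in> E} \<subseteq> V"
  unfolding simple_graph_def by (auto simp: doubleton_eq_iff) 

lemma nbr_fin: "simple_graph V E \<Longrightarrow> finite {u. {u, v} \<in> E}"
  using nbr_sub simple_graph_def finite_subset by metis

lemma no_loop: "simple_graph V E \<Longrightarrow> {x, x} \<notin> E"
  unfolding simple_graph_def by (auto simp: doubleton_eq_iff)

lemma sg_del: "simple_graph V E \<Longrightarrow> simple_graph (V - S) (del_edges E S)"
  unfolding simple_graph_def del_edges_def by fastforce

lemma deg_del_le: "simple_graph V E \<Longrightarrow> deg (del_edges E S) u \<le> deg E u"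
  unfolding deg_def by (rule card_mono[OF nbr_fin]) (auto simp: del_edges_def)

lemma deg_del: "simple_graph V E \<Longrightarrow> u \<noteq> v \<Longrightarrow>
   deg (del_edges E {v}) u = deg E u - (if {u, v} \<in> E then 1 else 0)"
proof -
  assume sg: "simple_graph V E" and uv: "u \<noteq> v"
  have eq: "{w. {w, u} \<in> del_edges E {v}} = {w. {w, u} \<in> E} - {v}"
    using uv by (auto simp: del_edges_def)
  have iff: "v \<in> {w. {w, u} \<in> E} \<longleftrightarrow> {u, v} \<in> E" by (simp add: insert_commute)
  show ?thesis unfolding deg_def eq using iff nbr_fin[OF sg, of u] by auto
qed

lemma cycle_mono: "E' \<subseteq> E \<Longrightarrow> is_cycle E' cs \<Longrightarrow> is_cycle E cs"
  unfolding is_cycle_def by auto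

lemma forest_del: "forest V E \<Longrightarrow> forest (V - S) (del_edges E S)"
  unfolding forest_def using cycle_mono[of "del_edges E S" E] by (auto simp: del_edges_def)

lemma cycle_exists:
  assumes sg: "simple_graph V E" and ne: "V \<noteq> {}" and d2: "\<forall>v\<in>V. 2 \<le> deg E v"
  shows "\<exists>cs. set cs \<subseteq> V \<and> is_cycle E cs"
proof -
  define P where "P ps \<longleftrightarrow> ps \<noteq> [] \<and> set ps \<subseteq> V \<and> distinct ps \<and>
      (\<forall>i. Suc i < length ps \<longrightarrow> {ps!i, ps!Suc i} \<in> E)" for ps
  have finV: "finite V" using sg simple_graph_def by auto
  obtain v where v: "v \<in> V" using ne by auto
  have Pv: "P [v]" using v by (simp add: P_def)
  have bnd: "\<forall>ps. P ps \<longrightarrow> length ps < Suc (card V)"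
  proof (intro allI impI)
    fix ps assume "P ps"
    then have "card (set ps) \<le> card V" "distinct ps" using card_mono[OF finV] by (auto simp: P_def)
    then show "length ps < Suc (card V)" using distinct_card by fastforce
  qed
  obtain ps where Pps: "P ps" and maxl: "\<forall>qs. P qs \<longrightarrow> length qs \<le> length ps"
    using ex_has_greatest_nat[of P "[v]" length, OF Pv bnd] by blast
  define n where "n = length ps"
  define x where "x = last ps"
  have ne_ps: "ps \<noteq> []" using Pps P_def by auto
  have xn: "ps ! (n - 1) = x" using ne_ps by (simp add: x_def n_def last_conv_nth)
  have n1: "n \<ge> 1" using ne_ps n_def by (cases ps) auto
  have xV: "x \<in> V" using Pps ne_ps by (auto simp: P_def x_def)
  have ext: "y \<in> set ps" if yx: "{y, x} \<in> E" for y
  proof (rule ccontr)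
    assume yn: "y \<notin> set ps"
    have yV: "y \<in> V" using nbr_sub[OF sg, of x] yx by auto
    have "P (ps @ [y])"
      unfolding P_def
    proof (intro conjI allI impI)
      show "ps @ [y] \<noteq> []" by simp
      show "set (ps @ [y]) \<subseteq> V" using Pps yV by (auto simp: P_def)
      show "distinct (ps @ [y])" using Pps yn by (auto simp: P_def)
      fix i assume i: "Suc i < length (ps @ [y])"
      show "{(ps @ [y]) ! i, (ps @ [y]) ! Suc i} \<in> E"
      proof (cases "Suc i < n")
        case True
        then show ?thesis using Pps by (auto simp: P_def nth_append n_def)
      next
        case False
        then have "i = n - 1" using i n_def by auto
        then show ?thesis using xn n1 yx n_def by (auto simp: nth_append insert_commute)
      qed
    qed
    then show False using maxl by fastforce
  qed
  have "2 \<le> card {u. {u, x} \<in> E}" using d2 xV by (simp add: deg_def)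
  then obtain y1 y2 where y12: "y1 \<noteq> y2" "{y1, x} \<in> E" "{y2, x} \<in> E"
  proof -
    assume H: "\<And>y1 y2. y1 \<noteq> y2 \<Longrightarrow> {y1, x} \<in> E \<Longrightarrow> {y2, x} \<in> E \<Longrightarrow> thesis"
    have "{u. {u, x} \<in> E} \<noteq> {}" using \<open>2 \<le> card {u. {u, x} \<in> E}\<close> by (metis card.empty not_numeral_le_zero)
    then obtain a where a: "{a, x} \<in> E" by auto
    have "card ({u. {u, x} \<in> E} - {a}) \<ge> 1"
      using \<open>2 \<le> card {u. {u, x} \<in> E}\<close> nbr_fin[OF sg, of x] a by (simp add: card_Diff_singleton)
    then have "{u. {u, x} \<in> E} - {a} \<noteq> {}" by (metis card.empty not_one_le_zero)
    then obtain b where "{b, x} \<in> E" "b \<noteq> a" by auto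
    then show thesis using H a by metis
  qed
  have noxx: "\<And>y. {y, x} \<in> E \<Longrightarrow> y \<noteq> x" using no_loop[OF sg] by blast
  obtain y where y: "{y, x} \<in> E" "n \<ge> 2 \<longrightarrow> y \<noteq> ps ! (n - 2)"
    using y12 by metis
  have yps: "y \<in> set ps" using ext y by auto
  then obtain j where j: "j < n" "ps ! j = y" by (auto simp: in_set_conv_nth n_def)
  have yx: "y \<noteq> x" using noxx y by auto
  have "n \<ge> 2"
  proof (rule ccontr)
    assume "\<not> n \<ge> 2"
    then have "n = 1" using n1 by auto
    then show False using j xn yx by auto
  qed
  have jn1: "j \<noteq> n - 1" using j xn yx by auto
  have jn2: "j \<noteq> n - 2" using j y \<open>n \<ge> 2\<close> by auto
  have j3: "j + 3 \<le> n" using j jn1 jn2 by auto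
  define cs where "cs = drop j ps"
  have lcs: "length cs = n - j" by (simp add: cs_def n_def)
  have "is_cycle E cs"
    unfolding is_cycle_def
  proof (intro conjI allI impI)
    show "3 \<le> length cs" using lcs j3 by auto
    show "distinct cs" using Pps by (simp add: P_def cs_def)
    fix i assume i: "i < length cs"
    show "{cs ! i, cs ! ((i + 1) mod length cs)} \<in> E"
    proof (cases "i + 1 < length cs")
      case True
      then have "Suc (j + i) < length ps" using lcs n_def by auto
      then show ?thesis using Pps True j by (auto simp: P_def cs_def)
    next
      case False
      then have ii: "i = n - j - 1" using i lcs by auto
      have "i + 1 = length cs" using ii lcs j3 by auto
      then have m: "(i + 1) mod length cs = 0" by simp
      have "cs ! i = x" using ii j3 xn by (simp add: cs_def n_def)
      moreover have "cs ! 0 = y" using j by (simp add: cs_def n_def)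
      ultimately show ?thesis using m y by (simp add: insert_commute)
    qed
  qed
  moreover have "set cs \<subseteq> V" using Pps set_drop_subset[of j ps] by (auto simp: P_def cs_def)
  ultimately show ?thesis by blast
qed

lemma forest_leaf:
  assumes "simple_graph V E" "forest V E" "V \<noteq> {}"
  shows "\<exists>v\<in>V. deg E v \<le> 1"
  using cycle_exists[OF assms(1,3)] assms(2) unfolding forest_def by fastforce



definition tt :: "'a set \<Rightarrow> 'a \<Rightarrow> nat \<Rightarrow> int" where
  "tt F u n = (if u \<in> F then int n - 2 else min 0 (int n - 2))"

definition Psi :: "'a set \<Rightarrow> 'a set set \<Rightarrow> 'a set \<Rightarrow> int" where
  "Psi V E F = (\<Sum>u\<in>V. tt F u (deg E u))"

lemma tt_lip: "n' \<le> n \<Longrightarrow> n \<le> n' + b \<Longrightarrow> tt F u n \<le> tt F u n' + int b"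
  unfolding tt_def by auto

lemma del_Psi:
  assumes sg: "simple_graph V E" and v: "v \<in> V"
  shows "Psi V E F \<le> Psi (V - {v}) (del_edges E {v}) F + tt F v (deg E v) + int (deg E v)"
proof -
  have fin: "finite V" using sg simple_graph_def by auto
  have 1: "Psi V E F = tt F v (deg E v) + (\<Sum>u\<in>V-{v}. tt F u (deg E u))"
    by (simp add: Psi_def sum.remove[OF fin v])
  have 2: "tt F u (deg E u) \<le> tt F u (deg (del_edges E {v}) u) + of_bool ({u, v} \<in> E)"
    if u: "u \<in> V - {v}" for u
  proof -
    have d: "deg (del_edges E {v}) u = deg E u - (if {u, v} \<in> E then 1 else 0)"
      using deg_del[OF sg] u by auto
    have pos: "{u, v} \<in> E \<Longrightarrow> deg E u \<ge> 1"
    proof -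
      assume "{u, v} \<in> E"
      then have "v \<in> {w. {w, u} \<in> E}" by (simp add: insert_commute)
      then show "deg E u \<ge> 1" unfolding deg_def using nbr_fin[OF sg, of u]
        by (metis One_nat_def Suc_leI card_gt_0_iff empty_iff)
    qed
    show ?thesis using tt_lip[of "deg (del_edges E {v}) u" "deg E u" "if {u, v} \<in> E then 1 else 0" F u] d pos
      by (cases "{u, v} \<in> E") auto
  qed
  have 3: "(\<Sum>u\<in>V-{v}. tt F u (deg E u)) \<le> (\<Sum>u\<in>V-{v}. tt F u (deg (del_edges E {v}) u) + of_bool ({u, v} \<in> E))"
    by (rule sum_mono) (use 2 in auto)
  have 4: "(\<Sum>u\<in>V-{v}. (of_bool ({u, v} \<in> E) :: int)) \<le> int (deg E v)"
  proof -
    have "(\<Sum>u\<in>V-{v}. (of_bool ({u, v} \<in> E) :: int)) = int (card ((V - {v}) \<inter> {u. {u, v} \<in> E}))"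
      using fin by simp
    also have "\<dots> \<le> int (deg E v)" unfolding deg_def
      using card_mono[OF nbr_fin[OF sg, of v]] by auto
    finally show ?thesis .
  qed
  have 5: "Psi (V - {v}) (del_edges E {v}) F = (\<Sum>u\<in>V-{v}. tt F u (deg (del_edges E {v}) u))"
    by (simp add: Psi_def)
  show ?thesis using 1 3 4 5 by (simp add: sum.distrib)
qed

lemma Psi_cong: "v \<notin> V \<Longrightarrow> Psi V E (F - {v}) = Psi V E F"
  unfolding Psi_def tt_def by (rule sum.cong) auto

lemma Psi_insert:
  assumes fin: "finite V" and v: "v \<in> V" "v \<notin> F" and d: "2 \<le> deg E v"
  shows "Psi V E (insert v F) = Psi V E F + (int (deg E v) - 2)"
proof -
  have a: "Psi V E (insert v F) = tt (insert v F) v (deg E v) + (\<Sum>u\<in>V-{v}. tt (insert v F) u (deg E u))"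
    by (simp add: Psi_def sum.remove[OF fin v(1)])
  have b: "Psi V E F = tt F v (deg E v) + (\<Sum>u\<in>V-{v}. tt F u (deg E u))"
    by (simp add: Psi_def sum.remove[OF fin v(1)])
  have c: "(\<Sum>u\<in>V-{v}. tt (insert v F) u (deg E u)) = (\<Sum>u\<in>V-{v}. tt F u (deg E u))"
    by (rule sum.cong) (auto simp: tt_def)
  show ?thesis using a b c v d by (simp add: tt_def)
qed

lemma Psi_nonneg: "\<forall>u\<in>V. 2 \<le> deg E u \<Longrightarrow> 0 \<le> Psi V E F"
  unfolding Psi_def by (rule sum_nonneg) (auto simp: tt_def)

lemma Psi_empty: "\<forall>u\<in>V. 2 \<le> deg E u \<Longrightarrow> Psi V E {} = 0"
  unfolding Psi_def by (rule sum.neutral) (auto simp: tt_def)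

lemma Psi_forest: "simple_graph V E \<Longrightarrow> forest V E \<Longrightarrow> Psi V E F \<le> 0"
proof (induction "card V" arbitrary: V E rule: less_induct)
  case less
  show ?case
  proof (cases "V = {}")
    case True then show ?thesis by (simp add: Psi_def)
  next
    case False
    then obtain v where v: "v \<in> V" "deg E v \<le> 1" using forest_leaf less.prems by blast
    have fin: "finite V" using less.prems simple_graph_def by auto
    have "card (V - {v}) < card V" using fin v by (meson card_Diff1_less)
    then have ih: "Psi (V - {v}) (del_edges E {v}) F \<le> 0"
      using less.hyps sg_del[OF less.prems(1)] forest_del[OF less.prems(2)] by blast
    have "tt F v (deg E v) + int (deg E v) \<le> 0" using v(2) by (auto simp: tt_def)
    then show ?thesis using del_Psi[OF less.prems(1) v(1), of F] ih by linarith
  qed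
qed

lemma Psi_delX:
  assumes "finite X"
  shows "X \<subseteq> V - F \<Longrightarrow> simple_graph V E \<Longrightarrow> (\<forall>x\<in>X. deg E x \<le> D) \<Longrightarrow>
    Psi V E F \<le> Psi (V - X) (del_edges E X) F + int D * int (card X)"
  using assms
proof (induction X rule: finite_induct)
  case empty
  have "del_edges E {} = E" by (auto simp: del_edges_def)
  then show ?case by simp
next
  case (insert x X)
  have ih: "Psi V E F \<le> Psi (V - X) (del_edges E X) F + int D * int (card X)"
    using insert by auto
  have sg': "simple_graph (V - X) (del_edges E X)" using sg_del insert by blast
  have xV: "x \<in> V - X" "x \<notin> F" using insert by auto
  have dl: "Psi (V - X) (del_edges E X) F \<le> Psi (V - X - {x}) (del_edges (del_edges E X) {x}) F
      + tt F x (deg (del_edges E X) x) + int (deg (del_edges E X) x)"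
    using del_Psi[OF sg' xV(1)] by blast
  have dd: "deg (del_edges E X) x \<le> D" using deg_del_le[OF insert(5), of X x] insert(6) by auto
  have t0: "tt F x (deg (del_edges E X) x) \<le> 0" using xV(2) by (simp add: tt_def)
  have e1: "V - X - {x} = V - insert x X" by auto
  have e2: "del_edges (del_edges E X) {x} = del_edges E (insert x X)" by (auto simp: del_edges_def)
  have "card (insert x X) = card X + 1" using insert by simp
  then show ?case using ih dl dd t0 e1 e2 by (simp add: algebra_simps)
qed



lemma path_sub: "fvs_path V E k F Vm F' \<Longrightarrow> Vm \<subseteq> V \<and> F' \<subseteq> V - F"
  by (induction rule: fvs_path.induct) (auto simp: min_fvs_avoiding_def step2_vertex_def max_deg_choice_def)

lemma card_ins_sub: "A \<subseteq> B - C \<Longrightarrow> finite B \<Longrightarrow> v \<in> C \<Longrightarrow> card (insert v A) = card A + 1"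
proof -
  assume a: "A \<subseteq> B - C" and b: "finite B" and c: "v \<in> C"
  have "finite A" using a b by (meson Diff_subset finite_subset subset_trans)
  moreover have "v \<notin> A" using a c by auto
  ultimately show ?thesis by simp
qed

lemma main:
  "fvs_path V E k F Vm F' \<Longrightarrow> simple_graph V E \<Longrightarrow> (4::nat) \<le> D \<Longrightarrow> (\<forall>x\<in>V-F. deg E x \<le> D) \<Longrightarrow>
   real (card F') + 2 * of_int (Psi V E F) / real D \<le> 2 * real (card Vm)"
proof (induction arbitrary: D rule: fvs_path.induct)
  case (step0 k V E F)
  then show ?case by (simp add: Psi_def)
next
  case (step1 k V v E F Vm F')
  have sg': "simple_graph (V - {v}) (del_edges E {v})" using sg_del step1 by blast
  have vD: "\<forall>x\<in>(V - {v}) - (F - {v}). deg (del_edges E {v}) x \<le> D"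
    using step1(9) deg_del_le[OF step1(7)] le_trans by blast
  have ih: "real (card F') + 2 * of_int (Psi (V - {v}) (del_edges E {v}) (F - {v})) / real D \<le> 2 * real (card Vm)"
    using step1.IH[OF sg' step1(8) vD] .
  have "tt F v (deg E v) + int (deg E v) \<le> 0" using step1(4) by (auto simp: tt_def)
  then have "Psi V E F \<le> Psi (V - {v}) (del_edges E {v}) (F - {v})"
    using del_Psi[OF step1(7) step1(3), of F] Psi_cong[of v "V - {v}"] by auto
  then have "2 * of_int (Psi V E F) / real D \<le> 2 * of_int (Psi (V - {v}) (del_edges E {v}) (F - {v})) / real D"
    using step1(8) by (simp add: divide_right_mono)
  then show ?case using ih by linarith
next
  case (step2 k V E F v Vm F')
  have vV: "v \<in> V" "v \<notin> F" using step2(4) by (auto simp: step2_vertex_def)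
  have sg': "simple_graph (V - {v}) (del_edges E {v})" using sg_del step2 by blast
  have vD: "\<forall>x\<in>(V - {v}) - F. deg (del_edges E {v}) x \<le> D"
    using step2(9) deg_del_le[OF step2(7)] le_trans by blast
  have ih: "real (card F') + 2 * of_int (Psi (V - {v}) (del_edges E {v}) F) / real D \<le> 2 * real (card Vm)"
    using step2.IH[OF sg' step2(8) vD] .
  have "tt F v (deg E v) \<le> 0" using vV by (auto simp: tt_def)
  moreover have "deg E v \<le> D" using step2(9) vV by auto
  ultimately have "Psi V E F \<le> Psi (V - {v}) (del_edges E {v}) F + int D"
    using del_Psi[OF step2(7) vV(1), of F] by linarith
  then have "2 * of_int (Psi V E F) / real D \<le> 2 * of_int (Psi (V - {v}) (del_edges E {v}) F) / real D + 2"
    using step2(8) by (simp add: field_simps)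
  moreover have "card (insert v Vm) = card Vm + 1"
  proof -
    have "Vm \<subseteq> V - {v}" using path_sub[OF step2(5)] by auto
    moreover have "finite V" using step2(7) simple_graph_def by auto
    ultimately show ?thesis using card_ins_sub[of Vm V "{v}" v] by blast
  qed
  ultimately show ?case using ih by simp
next
  case (step4' V E k F v X)
  have fin: "finite V" using step4'(6) simple_graph_def by auto
  have X: "X \<subseteq> V - F" "forest (V - X) (del_edges E X)" using step4'(4) by (auto simp: min_fvs_avoiding_def)
  have finX: "finite X" using X fin finite_subset by blast
  have "Psi V E F \<le> Psi (V - X) (del_edges E X) F + int D * int (card X)"
    using Psi_delX[OF finX X(1) step4'(6)] step4'(8) X(1) by blast
  moreover have "Psi (V - X) (del_edges E X) F \<le> 0"
    using Psi_forest[OF sg_del[OF step4'(6)] X(2)] .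
  ultimately have "Psi V E F \<le> int D * int (card X)" by linarith
  then have "of_int (Psi V E F) \<le> real D * real (card X)"
    by (metis of_int_le_iff of_int_mult of_int_of_nat_eq)
  then have "2 * of_int (Psi V E F) / real D \<le> 2 * real (card X)"
    using step4'(7) by (simp add: field_simps)
  then show ?case by simp
next
  case (step5 V E k F v Vm F')
  have vV: "v \<in> V" "v \<notin> F" using step5(2) by (auto simp: max_deg_choice_def)
  have sg': "simple_graph (V - {v}) (del_edges E {v})" using sg_del step5 by blast
  have vD: "\<forall>x\<in>(V - {v}) - F. deg (del_edges E {v}) x \<le> D"
    using step5(8) deg_del_le[OF step5(6)] le_trans by blast
  have ih: "real (card F') + 2 * of_int (Psi (V - {v}) (del_edges E {v}) F) / real D \<le> 2 * real (card Vm)"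
    using step5.IH[OF sg' step5(7) vD] .
  have "tt F v (deg E v) \<le> 0" using vV by (auto simp: tt_def)
  moreover have "deg E v \<le> D" using step5(8) vV by auto
  ultimately have "Psi V E F \<le> Psi (V - {v}) (del_edges E {v}) F + int D"
    using del_Psi[OF step5(6) vV(1), of F] by linarith
  then have "2 * of_int (Psi V E F) / real D \<le> 2 * of_int (Psi (V - {v}) (del_edges E {v}) F) / real D + 2"
    using step5(7) by (simp add: field_simps)
  moreover have "card (insert v Vm) = card Vm + 1"
  proof -
    have "Vm \<subseteq> V - {v}" using path_sub[OF step5(4)] by auto
    moreover have "finite V" using step5(6) simple_graph_def by auto
    ultimately show ?thesis using card_ins_sub[of Vm V "{v}" v] by blast
  qed
  ultimately show ?case using ih by simp
next
  case (step6 V E k F v Vm F')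
  have vV: "v \<in> V" "v \<notin> F" using step6(2) by (auto simp: max_deg_choice_def)
  define d where "d = deg E v"
  have d4: "4 \<le> d" using step6(3) d_def by auto
  have dD: "d \<le> D" using step6(8) vV d_def by auto
  have fin: "finite V" using step6(6) simple_graph_def by auto
  have all2: "\<forall>u\<in>V. 2 \<le> deg E u" using step6(1) by (simp add: reaches_step3_def)
  have vd: "\<forall>x\<in>V - insert v F. deg E x \<le> d" using step6(2) d_def by (auto simp: max_deg_choice_def)
  have ih: "real (card F') + 2 * of_int (Psi V E (insert v F)) / real d \<le> 2 * real (card Vm)"
    using step6.IH[OF step6(6) d4 vd] .
  have pi: "Psi V E (insert v F) = Psi V E F + (int d - 2)"
    using Psi_insert[OF fin vV] all2 vV d_def by auto
  have p0: "0 \<le> Psi V E F" using Psi_nonneg[OF all2] .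
  define p where "p = real_of_int (Psi V E F)"
  have p0': "0 \<le> p" using p0 p_def by simp
  have dpos: "(0::real) < real d" using d4 by simp
  have e1: "2 * of_int (Psi V E (insert v F)) / real d = 2 * p / real d + 2 - 4 / real d"
  proof -
    have "real_of_int (Psi V E (insert v F)) = p + real d - 2" using pi d4 by (simp add: p_def)
    then have "2 * of_int (Psi V E (insert v F)) / real d = (2 * p + 2 * real d - 4) / real d"
      by (simp add: algebra_simps)
    also have "\<dots> = 2 * p / real d + 2 * real d / real d - 4 / real d"
      by (simp add: add_divide_distrib diff_divide_distrib)
    also have "\<dots> = 2 * p / real d + 2 - 4 / real d" using dpos by simp
    finally show ?thesis .
  qed
  have e2: "2 * p / real D \<le> 2 * p / real d"
    using p0' dpos dD by (simp add: frac_le)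
  have e3: "1 \<le> 2 - 4 / real d" using d4 dpos by (simp add: field_simps)
  have "card (insert v F') = card F' + 1"
  proof -
    have "F' \<subseteq> V - insert v F" using path_sub[OF step6(4)] by auto
    then show ?thesis using fin card_ins_sub[of F' V "insert v F" v] by blast
  qed
  then have "real (card (insert v F')) = real (card F') + 1" by simp
  moreover have "2 * of_int (Psi V E F) / real D = 2 * p / real D" by (simp add: p_def)
  ultimately show ?case using ih e1 e2 e3 by linarith
qed

lemma startF:
  "fvs_path V E k F Vm F' \<Longrightarrow> F = {} \<Longrightarrow> simple_graph V E \<Longrightarrow> card F' \<le> 2 * card Vm"
proof (induction rule: fvs_path.induct)
  case (step0 k V E F) then show ?case by simp
next
  case (step1 k V v E F Vm F')
  show ?case using step1.IH[OF _ sg_del[OF step1(8)]] step1(7) by simp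
next
  case (step2 k V E F v Vm F')
  have "finite V" using step2(8) by (simp add: simple_graph_def)
  moreover have "Vm \<subseteq> V" using path_sub[OF step2(5)] by auto
  ultimately have "finite Vm" by (rule finite_subset[rotated])
  then have "card Vm \<le> card (insert v Vm)" by (simp add: card_insert_le)
  moreover have "card F' \<le> 2 * card Vm" using step2.IH[OF step2(7) sg_del[OF step2(8)]] .
  ultimately show ?case by linarith
next
  case (step4' V E k F v X) then show ?case by simp
next
  case (step5 V E k F v Vm F')
  have "finite V" using step5(7) by (simp add: simple_graph_def)
  moreover have "Vm \<subseteq> V" using path_sub[OF step5(4)] by auto
  ultimately have "finite Vm" by (rule finite_subset[rotated])
  then have "card Vm \<le> card (insert v Vm)" by (simp add: card_insert_le)
  moreover have "card F' \<le> 2 * card Vm" using step5.IH[OF step5(6) sg_del[OF step5(7)]] .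
  ultimately show ?case by linarith
next
  case (step6 V E k F v Vm F')
  have vV: "v \<in> V" using step6(2) by (auto simp: max_deg_choice_def)
  define d where "d = deg E v"
  have d4: "4 \<le> d" using step6(3) d_def by auto
  have fin: "finite V" using step6(7) simple_graph_def by auto
  have all2: "\<forall>u\<in>V. 2 \<le> deg E u" using step6(1) by (simp add: reaches_step3_def)
  have vd: "\<forall>x\<in>V - insert v F. deg E x \<le> d" using step6(2) d_def by (auto simp: max_deg_choice_def)
  have m: "real (card F') + 2 * of_int (Psi V E (insert v F)) / real d \<le> 2 * real (card Vm)"
    using main[OF step6(4) step6(7) d4 vd] .
  have "Psi V E (insert v F) = int d - 2"
    using Psi_insert[OF fin vV, of F E] Psi_empty[OF all2] all2 vV d_def step6(6) by auto
  then have "2 * of_int (Psi V E (insert v F)) / real d = 2 - 4 / real d"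
    using d4 by (simp add: field_simps)
  moreover have "1 \<le> 2 - 4 / real d" using d4 by (simp add: field_simps)
  ultimately have "real (card F') + 1 \<le> 2 * real (card Vm)" using m by linarith
  then have "real (card F' + 1) \<le> real (2 * card Vm)" by simp
  then have cc: "card F' + 1 \<le> 2 * card Vm" by (simp only: of_nat_le_iff)
  moreover have "card (insert v F') = card F' + 1"
  proof -
    have "F' \<subseteq> V - insert v F" using path_sub[OF step6(4)] by auto
    then show ?thesis using fin card_ins_sub[of F' V "insert v F" v] by blast
  qed
  ultimately show ?case by simp
qed

theorem mainTheorem8:
  fixes V :: "'a set" and E :: "'a set set" and k :: int
  assumes "simple_graph V E"
    and "fvs_path V E k {} Vm F'"
  shows "card F' \<le> 2 * card Vm"
  using startF[OF assms(2) refl assms(1)] .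

end
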